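(* Let $\lambda_0\le0\le\lambda_1$ be real and $a<b$. Then for all $t\in[a,b]$, $$\Omega^{a,b}_{\lambda_0,\lambda_1,0}(t)\le(b-a)\left|G^{a,b}_{\lambda_0,\lambda_1}(t,t)\right|,\qquad G^{a,b}_{\lambda_0,\lambda_1}(t,t):=\frac{\Phi_{(\lambda_0,\lambda_1)}(t-b)\,\Phi_{(-\lambda_0,-\lambda_1)}(t-a)}{\Phi_{(-\lambda_0,-\lambda_1)}(b-a)}.$$
   Context: For real $\lambda_0,\dots,\lambda_N$, $L_{(\lambda_0,\dots,\lambda_N)}=\prod_{j=0}^N(\frac{d}{dt}-\lambda_j)$, $E(\lambda_0,\dots,\lambda_N)=\{f\in C^{N+1}(\mathbb{R}):L_{(\lambda_0,\dots,\lambda_N)}f=0\}$, and the fundamental function $\Phi_{(\lambda_0,\dots,\lambda_N)}$ is the unique element of $E(\lambda_0,\dots,\lambda_N)$ with $\Phi^{(k)}(0)=0$ for $0\le k\le N-1$ and $\Phi^{(N)}(0)=1$ (e.g. $\Phi_{(\lambda_0,\lambda_1)}(t)=\frac{e^{\lambda_1t}-e^{\lambda_0t}}{\lambda_1-\lambda_0}$ for $\lambda_0\ne\lambda_1$). For real $\lambda_0,\lambda_1$ and $a<b$, $\Omega^{a,b}_{\lambda_0,\lambda_1,0}$ is the unique $u\in E(\lambda_0,\lambda_1,0)$ with $u(a)=u(b)=0$ and $L_{(\lambda_0,\lambda_1)}u\equiv-1$. ($G^{a,b}_{\lambda_0,\lambda_1}(t,t)$ is the diagonal of the Green function of $L_{(\lambda_0,\lambda_1)}$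 on $[a,b]$ with zero boundary conditions.) *)

theory Defs
  imports "HOL-Analysis.Analysis"
begin

definition Lfac :: "real \<Rightarrow> (real \<Rightarrow> real) \<Rightarrow> (real \<Rightarrow> real)" where
  "Lfac l f = (\<lambda>t. deriv f t - l * f t)"

definition Lop :: "real list \<Rightarrow> (real \<Rightarrow> real) \<Rightarrow> (real \<Rightarrow> real)" where
  "Lop ls f = foldr Lfac ls f"

definition Cn :: "nat \<Rightarrow> (real \<Rightarrow> real) \<Rightarrow> bool" where
  "Cn n f \<longleftrightarrow> (\<forall>k<n. \<forall>t. ((deriv ^^ k) f) differentiable (at t))
                 \<and> continuous_on UNIV ((deriv ^^ n) f)"

text \<open>E(l0,...,lN) = {f in C^{N+1}(R). L f = 0}; here N+1 = length ls.\<close>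
definition Espace :: "real list \<Rightarrow> (real \<Rightarrow> real) set" where
  "Espace ls = {f. Cn (length ls) f \<and> (\<forall>t. Lop ls f t = 0)}"

definition Phi :: "real list \<Rightarrow> real \<Rightarrow> real" where
  "Phi ls = (THE f. f \<in> Espace ls \<and> (\<forall>k < length ls - 1. (deriv ^^ k) f 0 = 0)
                   \<and> (deriv ^^ (length ls - 1)) f 0 = 1)"

definition Omega :: "real \<Rightarrow> real \<Rightarrow> real \<Rightarrow> real \<Rightarrow> real \<Rightarrow> real" where
  "Omega l0 l1 a b = (THE u. u \<in> Espace [l0, l1, 0] \<and> u a = 0 \<and> u b = 0
                          \<and> (\<forall>t. Lop [l0, l1] u t = -1))"

definition Gdiag :: "real \<Rightarrow> real \<Rightarrow> real \<Rightarrow> real \<Rightarrow> real \<Rightarrow> real" where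
  "Gdiag l0 l1 a b t = Phi [l0, l1] (t - b) * Phi [-l0, -l1] (t - a) / Phi [-l0, -l1] (b - a)"

end

theory Submission
  imports Defs
begin

definition phi :: "real \<Rightarrow> real \<Rightarrow> real \<Rightarrow> real" where
  "phi p q t = (if p = q then t * exp (p*t) else (exp (q*t) - exp (p*t)) / (q - p))"

lemma phi_deriv: "(phi p q has_real_derivative (q * phi p q t + exp (p*t))) (at t)"
proof (cases "p = q")
  case True
  have "((\<lambda>t. t * exp (p*t)) has_real_derivative (1 * exp (p*t) + t * (exp (p*t) * p))) (at t)"
    by (auto intro!: derivative_eq_intros)
  then show ?thesis using True unfolding phi_def by (simp add: algebra_simps)
next
  case False
  have "((\<lambda>t. (exp (q*t) - exp (p*t)) / (q - p)) has_real_derivative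
       ((exp (q*t) * q - exp (p*t) * p) / (q - p))) (at t)"
    using False by (auto intro!: derivative_eq_intros)
  moreover have "(exp (q*t) * q - exp (p*t) * p) / (q - p) = q * phi p q t + exp (p*t)"
    using False unfolding phi_def by (simp add: field_simps)
  ultimately show ?thesis using False unfolding phi_def by simp
qed

lemma phi_0 [simp]: "phi p q 0 = 0" by (simp add: phi_def)

lemma phi_add: "phi p q (x + y) = exp (q*y) * phi p q x + exp (p*x) * phi p q y"
proof (cases "p = q")
  case True then show ?thesis unfolding phi_def by (simp add: distrib_left exp_add algebra_simps)
next
  case False
  have "exp(q*y)*((exp(q*x)-exp(p*x))/(q-p)) + exp(p*x)*((exp(q*y)-exp(p*y))/(q-p))
     = (exp(q*y)*(exp(q*x)-exp(p*x)) + exp(p*x)*(exp(q*y)-exp(p*y)))/(q-p)"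
    by (simp add: add_divide_distrib)
  also have "exp(q*y)*(exp(q*x)-exp(p*x)) + exp(p*x)*(exp(q*y)-exp(p*y)) = exp(q*(x+y)) - exp(p*(x+y))"
    by (simp add: distrib_left exp_add algebra_simps)
  finally show ?thesis using False unfolding phi_def by simp
qed

lemma phi_swap: "phi (-p) (-q) x = exp (-(p+q)*x) * phi p q x"
proof (cases "p = q")
  case True
  have "exp (-(q+q)*x) * exp (q*x) = exp (-q*x)" by (simp add: mult_exp_exp algebra_simps)
  then show ?thesis using True unfolding phi_def by (simp add: algebra_simps)
next
  case False
  have "exp (-(p+q)*x) * ((exp (q*x) - exp (p*x)) / (q - p)) = (exp (-(p+q)*x) * exp (q*x) - exp (-(p+q)*x) * exp (p*x)) / (q-p)"
    by (simp add: algebra_simps)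
  also have "\<dots> = (exp (-p*x) - exp (-q*x)) / (q-p)" by (simp add: mult_exp_exp algebra_simps)
  also have "\<dots> = (exp (-q*x) - exp (-p*x)) / (-q - -p)" by (metis minus_diff_eq minus_divide_divide minus_minus diff_minus_eq_add uminus_add_conv_diff)
  finally show ?thesis using False unfolding phi_def by simp
qed

lemma phi1_pos:
  assumes "(p \<le> 0 \<and> 0 \<le> q) \<or> (q \<le> 0 \<and> 0 \<le> p)"
  shows "q * phi p q x + exp (p*x) > 0"
proof (cases "p = q")
  case True
  then have "p = 0" using assms by auto
  then show ?thesis using True by (simp add: phi_def)
next
  case False
  have e: "q * phi p q x + exp (p*x) = (q * exp (q*x) - p * exp (p*x)) / (q - p)"
    using False unfolding phi_def by (simp add: field_simps)
  have A: "q * exp (q*x) - p * exp (p*x) > 0" if "p \<le> 0" "0 \<le> q" "p < q" for p q :: real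
  proof -
    have "q * exp (q*x) \<ge> 0" using that by simp
    have "p * exp (p*x) \<le> 0" using that by (simp add: mult_nonpos_nonneg)
    then have "- p * exp (p*x) \<ge> 0" by simp
    moreover have "q * exp (q*x) > 0 \<or> - p * exp (p*x) > 0" using that
      by (cases "q > 0") (auto simp: mult_neg_pos)
    ultimately show ?thesis using \<open>q * exp (q*x) \<ge> 0\<close> by linarith
  qed
  show ?thesis
  proof (cases "p < q")
    case True
    then have "q * exp (q*x) - p * exp (p*x) > 0" using assms A[of p q] by auto
    then show ?thesis using e True by simp
  next
    case f2: False
    then have "q < p" using False by simp
    then have "p * exp (p*x) - q * exp (q*x) > 0" using assms A[of q p] by auto
    then have "q * exp (q*x) - p * exp (p*x) < 0" by simp
    then show ?thesis using e \<open>q < p\<close> by (simp add: divide_neg_neg)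
  qed
qed

lemma ode1:
  fixes g :: "real \<Rightarrow> real"
  assumes d: "\<And>t. (g has_real_derivative c * g t) (at t)"
  shows "g t = g 0 * exp (c*t)"
proof -
  have "((\<lambda>t. g t * exp (-c*t)) has_real_derivative 0) (at t)" for t
  proof -
    have "((\<lambda>t. g t * exp (-c*t)) has_real_derivative (c * g t * exp (-c*t) + g t * (exp (-c*t) * (-c)))) (at t)"
      by (auto intro!: derivative_eq_intros d)
    then show ?thesis by (simp add: algebra_simps)
  qed
  then have "g t * exp (-c*t) = g 0 * exp (-c*0)"
    using DERIV_isconst_all[of "\<lambda>t. g t * exp (-c*t)"] by blast
  then have h: "g t * exp (-c*t) = g 0" by simp
  have "g t = g t * (exp (-c*t) * exp (c*t))" by (simp add: mult_exp_exp)
  also have "\<dots> = g 0 * exp (c*t)" using h by (simp only: mult.assoc[symmetric])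
  finally show ?thesis .
qed

lemma diffI: "(f has_real_derivative D) (at t) \<Longrightarrow> f differentiable (at t)"
  using real_differentiable_def by blast

lemma Lop2:
  assumes d0: "\<And>t. (u has_real_derivative u1 t) (at t)"
      and d1: "\<And>t. (u1 has_real_derivative u2 t) (at t)"
  shows "Lop [p,q] u t = u2 t - (p+q) * u1 t + p*q*u t"
proof -
  have du: "deriv u = u1" using d0 DERIV_imp_deriv by blast
  have "deriv (\<lambda>t. u1 t - q*u t) t = u2 t - q * u1 t"
    by (rule DERIV_imp_deriv) (auto intro!: derivative_eq_intros d0 d1)
  then show ?thesis by (simp add: Lop_def Lfac_def du algebra_simps)
qed

lemma contI: "(\<And>t. (f has_real_derivative D t) (at t)) \<Longrightarrow> continuous_on UNIV f"
  by (meson DERIV_isCont continuous_at_imp_continuous_on)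

lemma Esp2:
  assumes d0: "\<And>t. (u has_real_derivative u1 t) (at t)"
      and d1: "\<And>t. (u1 has_real_derivative u2 t) (at t)"
      and eq: "\<And>t. u2 t - (p+q) * u1 t + p*q*u t = 0"
  shows "u \<in> Espace [p,q]"
proof -
  have du: "deriv u = u1" using d0 DERIV_imp_deriv by blast
  have du1: "deriv u1 = u2" using d1 DERIV_imp_deriv by blast
  have u2e: "u2 = (\<lambda>t. (p+q) * u1 t - p*q*u t)" using eq by (auto simp: algebra_simps fun_eq_iff)
  have cu: "continuous_on UNIV u" by (rule contI[OF d0])
  have cu1: "continuous_on UNIV u1" by (rule contI[OF d1])
  have "continuous_on UNIV u2" unfolding u2e by (intro continuous_intros cu cu1)
  moreover have "\<forall>k<2. \<forall>t. ((deriv ^^ k) u) differentiable (at t)"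
  proof (intro allI impI)
    fix k t assume "k < (2::nat)"
    then have "k = 0 \<or> k = 1" by auto
    then show "((deriv ^^ k) u) differentiable (at t)"
      using diffI[OF d0] diffI[OF d1] du by auto
  qed
  moreover have "(deriv ^^ 2) u = u2" by (simp add: numeral_2_eq_2 du du1)
  ultimately have "Cn 2 u" unfolding Cn_def by simp
  moreover have "\<forall>t. Lop [p,q] u t = 0" using Lop2[OF d0 d1] eq by simp
  ultimately show ?thesis unfolding Espace_def by (simp add: numeral_2_eq_2)
qed

lemma Esp3:
  assumes d0: "\<And>t. (u has_real_derivative u1 t) (at t)"
      and d1: "\<And>t. (u1 has_real_derivative u2 t) (at t)"
      and eq: "\<And>t. u2 t - (p+q) * u1 t + p*q*u t = c"
  shows "u \<in> Espace [p,q,0]" "\<And>t. Lop [p,q] u t = c"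
proof -
  have du: "deriv u = u1" using d0 DERIV_imp_deriv by blast
  have du1: "deriv u1 = u2" using d1 DERIV_imp_deriv by blast
  have u2e: "u2 = (\<lambda>t. c + (p+q) * u1 t - p*q*u t)" using eq by (auto simp: algebra_simps fun_eq_iff)
  have d2: "(u2 has_real_derivative ((p+q) * u2 t - p*q*u1 t)) (at t)" for t
    unfolding u2e by (auto intro!: derivative_eq_intros d0 d1 simp: u2e)
  have du2: "deriv u2 = (\<lambda>t. (p+q) * u2 t - p*q*u1 t)" using d2 DERIV_imp_deriv by blast
  have cu1: "continuous_on UNIV u1" by (rule contI[OF d1])
  have cu2: "continuous_on UNIV u2" by (rule contI[OF d2])
  have "continuous_on UNIV (deriv u2)" unfolding du2 by (intro continuous_intros cu2 cu1)
  moreover have "\<forall>k<3. \<forall>t. ((deriv ^^ k) u) differentiable (at t)"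
  proof (intro allI impI)
    fix k t assume "k < (3::nat)"
    then have "k = 0 \<or> k = 1 \<or> k = 2" by auto
    then show "((deriv ^^ k) u) differentiable (at t)"
      using diffI[OF d0] diffI[OF d1] diffI[OF d2] du du1 by (auto simp: numeral_2_eq_2)
  qed
  moreover have "(deriv ^^ 3) u = deriv u2" by (simp add: numeral_3_eq_3 du du1)
  ultimately have "Cn 3 u" unfolding Cn_def by simp
  moreover have "Lfac 0 u = u1" by (simp add: Lfac_def du)
  then have "Lop [p,q,0] u = Lop [p,q] u1" by (simp add: Lop_def)
  moreover have "Lop [p,q] u1 t = 0" for t using Lop2[OF d1 d2, of p q t] by (simp add: algebra_simps)
  ultimately show "u \<in> Espace [p,q,0]" unfolding Espace_def by (simp add: numeral_3_eq_3)
  show "\<And>t. Lop [p,q] u t = c" using Lop2[OF d0 d1] eq by simp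
qed

lemma gensol:
  assumes df: "\<And>t. f differentiable (at t)" and ddf: "\<And>t. deriv f differentiable (at t)"
      and L: "\<And>t. Lop [p,q] f t = 0"
  shows "f t = f 0 * exp (q*t) + (deriv f 0 - q * f 0) * phi p q t"
proof -
  define g where "g = (\<lambda>s. deriv f s - q * f s)"
  have Df: "(f has_real_derivative deriv f t) (at t)" for t
    using df DERIV_deriv_iff_real_differentiable by blast
  have Ddf: "(deriv f has_real_derivative deriv (deriv f) t) (at t)" for t
    using ddf DERIV_deriv_iff_real_differentiable by blast
  have Dg: "(g has_real_derivative deriv (deriv f) t - q * deriv f t) (at t)" for t
    unfolding g_def by (auto intro!: derivative_eq_intros Df Ddf)
  have "Lop [p,q] f t = deriv g t - p * g t" for t unfolding Lop_def Lfac_def g_def by simp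
  then have "deriv g t = p * g t" for t using L by (metis eq_iff_diff_eq_0)
  moreover have "deriv g t = deriv (deriv f) t - q * deriv f t" for t by (rule DERIV_imp_deriv[OF Dg])
  ultimately have Dg': "(g has_real_derivative p * g t) (at t)" for t using Dg[of t] by metis
  have gt: "g t = g 0 * exp (p*t)" for t by (rule ode1[OF Dg'])
  define d where "d = (\<lambda>s. f s - g 0 * phi p q s)"
  have "(d has_real_derivative q * d t) (at t)" for t
  proof -
    have "(d has_real_derivative deriv f t - g 0 * (q * phi p q t + exp (p*t))) (at t)"
      unfolding d_def by (auto intro!: derivative_eq_intros Df phi_deriv)
    moreover have "deriv f t = g t + q * f t" unfolding g_def by simp
    ultimately show ?thesis using gt[of t] unfolding d_def by (simp add: algebra_simps)
  qed
  then have "d t = d 0 * exp (q*t)" by (rule ode1)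
  then have "f t - g 0 * phi p q t = f 0 * exp (q*t)" unfolding d_def by simp
  moreover have "g 0 = deriv f 0 - q * f 0" unfolding g_def by simp
  ultimately show ?thesis by (simp add: algebra_simps)
qed

lemma phi_neg: "phi p q (-y) = - phi (-p) (-q) y"
proof (cases "p = q")
  case True then show ?thesis unfolding phi_def by simp
next
  case False
  have "(exp (- (q * y)) - exp (- (p * y))) / (q - p) = - ((exp (- (q * y)) - exp (- (p * y))) / (p - q))"
    by (metis minus_diff_eq divide_minus_right)
  then show ?thesis using False unfolding phi_def by simp
qed

lemma phi_mono_pos:
  assumes c: "(p \<le> 0 \<and> 0 \<le> q) \<or> (q \<le> 0 \<and> 0 \<le> p)" and x: "x > 0"
  shows "phi p q x > 0"
proof -
  have "phi p q 0 < phi p q x"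
    by (rule DERIV_pos_imp_increasing[OF x]) (use phi_deriv phi1_pos[OF c] in blast)
  then show ?thesis by simp
qed

lemma phi_nonneg:
  assumes c: "(p \<le> 0 \<and> 0 \<le> q) \<or> (q \<le> 0 \<and> 0 \<le> p)" and x: "x \<ge> 0"
  shows "phi p q x \<ge> 0"
  using phi_mono_pos[OF c, of x] x by (cases "x = 0") auto

lemma Phi_eq: "Phi [p,q] = phi p q"
proof -
  define u1 where "u1 = (\<lambda>t. q * phi p q t + exp (p*t))"
  define u2 where "u2 = (\<lambda>t. q * u1 t + p * exp (p*t))"
  have d0: "(phi p q has_real_derivative u1 t) (at t)" for t unfolding u1_def by (rule phi_deriv)
  have d1: "(u1 has_real_derivative u2 t) (at t)" for t
    unfolding u1_def u2_def by (auto intro!: derivative_eq_intros phi_deriv simp: algebra_simps)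
  have E: "phi p q \<in> Espace [p,q]"
    by (rule Esp2[OF d0 d1]) (simp add: u1_def u2_def algebra_simps)
  have du: "deriv (phi p q) = u1" using d0 DERIV_imp_deriv by blast
  show ?thesis unfolding Phi_def
  proof (rule the_equality)
    show "phi p q \<in> Espace [p, q] \<and> (\<forall>k<length [p, q] - 1. (deriv ^^ k) (phi p q) 0 = 0) \<and>
      (deriv ^^ (length [p, q] - 1)) (phi p q) 0 = 1"
      using E by (simp add: du u1_def)
  next
    fix f assume H: "f \<in> Espace [p, q] \<and> (\<forall>k<length [p, q] - 1. (deriv ^^ k) f 0 = 0) \<and>
      (deriv ^^ (length [p, q] - 1)) f 0 = 1"
    then have C: "Cn 2 f" and L: "\<And>t. Lop [p,q] f t = 0" and f0: "f 0 = 0" and df0: "deriv f 0 = 1"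
      by (auto simp: Espace_def numeral_2_eq_2)
    have df: "f differentiable (at t)" and ddf: "deriv f differentiable (at t)" for t
      using C unfolding Cn_def by (auto dest: spec[of _ 0] spec[of _ 1])
    show "f = phi p q"
    proof
      fix t show "f t = phi p q t" using gensol[OF df ddf L, of t] f0 df0 by simp
    qed
  qed
qed

lemma chainG:
  assumes "\<And>x. (G has_real_derivative g x) (at x)" "(f has_real_derivative f') (at t)"
  shows "((\<lambda>t. G (f t)) has_real_derivative g (f t) * f') (at t)"
  using DERIV_chain2[OF assms(1) assms(2)] .

lemma Tderiv:
  fixes h h' Psi Xi Fp ph :: "real \<Rightarrow> real"
  assumes dh: "\<And>x. (h has_real_derivative h' x) (at x)"
    and dPsi: "\<And>x. (Psi has_real_derivative Fp x) (at x)"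
    and dXi: "\<And>x. (Xi has_real_derivative ph x) (at x)"
  shows "((\<lambda>t. - h (t-b) * Psi (t-a) + K * h (t-a) * Xi (b-t)) has_real_derivative
     (- h' (t-b) * Psi (t-a) - h (t-b) * Fp (t-a) + K * h' (t-a) * Xi (b-t) - K * h (t-a) * ph (b-t))) (at t)"
proof -
  have 1: "((\<lambda>t. h (t-b)) has_real_derivative h' (t-b) * 1) (at t)"
    by (rule chainG[OF dh]) (auto intro!: derivative_eq_intros)
  have 2: "((\<lambda>t. h (t-a)) has_real_derivative h' (t-a) * 1) (at t)"
    by (rule chainG[OF dh]) (auto intro!: derivative_eq_intros)
  have 3: "((\<lambda>t. Psi (t-a)) has_real_derivative Fp (t-a) * 1) (at t)"
    by (rule chainG[OF dPsi]) (auto intro!: derivative_eq_intros)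
  have 4: "((\<lambda>t. Xi (b-t)) has_real_derivative ph (b-t) * (-1)) (at t)"
    by (rule chainG[OF dXi]) (auto intro!: derivative_eq_intros)
  show ?thesis
    by (auto intro!: derivative_eq_intros 1 2 3 4 simp: algebra_simps)
qed

lemma identC:
  "phi p q (-y) * phi (-p) (-q) x + exp (-(p+q)*(x+y)) * phi p q x * phi p q y = 0"
proof -
  have e: "exp (-(p+q)*y) * exp (-(p+q)*x) = exp (-(p+q)*(x+y))"
    by (simp add: mult_exp_exp algebra_simps)
  have gen: "\<And>A B C P Q::real. C = A*B \<Longrightarrow> -(A*P)*(B*Q) + C*Q*P = 0"
    by (simp add: algebra_simps)
  show ?thesis unfolding phi_neg phi_swap by (rule gen[OF e[symmetric]])
qed

lemma identW:
  "(q * phi p q (-y) + exp (p*(-y))) * phi (-p) (-q) x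
     + exp (-(p+q)*(x+y)) * (q * phi p q x + exp (p*x)) * phi p q y = phi (-p) (-q) (x+y)"
proof -
  have e: "exp (-(p+q)*y) * exp (-(p+q)*x) = exp (-(p+q)*(x+y))"
    by (simp add: mult_exp_exp algebra_simps)
  have e2: "exp (p*(-y)) * exp (-(p+q)*x) = exp (-(p+q)*(x+y)) * exp (q*y)"
    by (simp add: mult_exp_exp algebra_simps)
  have gen: "\<And>A B C Ey Qe Px Py Epx::real. C = A*B \<Longrightarrow> Ey*B = C*Qe \<Longrightarrow>
     (q*-(A*Py) + Ey)*(B*Px) + C*(q*Px + Epx)*Py = C*(Qe*Px + Epx*Py)"
  proof -
    fix A B C Ey Qe Px Py Epx :: real assume h: "C = A*B" "Ey*B = C*Qe"
    have "(q*-(A*Py) + Ey)*(B*Px) + C*(q*Px + Epx)*Py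
       = C*(Qe*Px + Epx*Py) + Px*(Ey*B - C*Qe) + q*Px*Py*(C - A*B)"
      by (simp add: algebra_simps)
    then show "(q*-(A*Py) + Ey)*(B*Px) + C*(q*Px + Epx)*Py = C*(Qe*Px + Epx*Py)" using h by simp
  qed
  have "(q * phi p q (-y) + exp (p*(-y))) * phi (-p) (-q) x
     + exp (-(p+q)*(x+y)) * (q * phi p q x + exp (p*x)) * phi p q y
     = exp (-(p+q)*(x+y)) * (exp (q*y) * phi p q x + exp (p*x) * phi p q y)"
    unfolding phi_neg phi_swap by (rule gen[OF e[symmetric] e2])
  also have "\<dots> = phi (-p) (-q) (x+y)" by (simp only: phi_swap[of p q "x+y"] phi_add[of p q x y])
  finally show ?thesis .
qed

definition omc :: "real \<Rightarrow> real \<Rightarrow> real \<Rightarrow> real \<Rightarrow> (real \<Rightarrow> real) \<Rightarrow> (real \<Rightarrow> real) \<Rightarrow> real \<Rightarrow> real" where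
  "omc p q a b Psi Xi = (\<lambda>t. (- phi p q (t-b) * Psi (t-a) + exp (-(p+q)*(b-a)) * phi p q (t-a) * Xi (b-t))
      / phi (-p) (-q) (b-a))"

lemma Omega_cand:
  fixes p q a b :: real and Psi Xi :: "real \<Rightarrow> real"
  assumes dPsi: "\<And>x. (Psi has_real_derivative phi (-p) (-q) x) (at x)" and Psi0: "Psi 0 = 0"
    and dXi: "\<And>x. (Xi has_real_derivative phi p q x) (at x)" and Xi0: "Xi 0 = 0"
    and Dnz: "phi (-p) (-q) (b-a) \<noteq> 0"
  shows "omc p q a b Psi Xi \<in> Espace [p,q,0]" "\<And>t. Lop [p,q] (omc p q a b Psi Xi) t = -1"
    "omc p q a b Psi Xi a = 0" "omc p q a b Psi Xi b = 0"
proof -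
  define K where "K = exp (-(p+q)*(b-a))"
  define D where "D = phi (-p) (-q) (b-a)"
  define F where "F = phi (-p) (-q)"
  define ph where "ph = phi p q"
  define h1 where "h1 = (\<lambda>x. q * phi p q x + exp (p*x))"
  define h2 where "h2 = (\<lambda>x. q * h1 x + p * exp (p*x))"
  have dh0: "(ph has_real_derivative h1 x) (at x)" for x unfolding ph_def h1_def by (rule phi_deriv)
  have dh1: "(h1 has_real_derivative h2 x) (at x)" for x
    unfolding h1_def h2_def by (auto intro!: derivative_eq_intros phi_deriv simp: algebra_simps)
  have Z: "h2 x = (p+q) * h1 x - p*q*ph x" for x unfolding h2_def h1_def ph_def by (simp add: algebra_simps)
  define N0 where "N0 = (\<lambda>t. - ph (t-b) * Psi (t-a) + K * ph (t-a) * Xi (b-t))"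
  define N1 where "N1 = (\<lambda>t. - h1 (t-b) * Psi (t-a) + K * h1 (t-a) * Xi (b-t))"
  define N2 where "N2 = (\<lambda>t. - h2 (t-b) * Psi (t-a) - h1 (t-b) * F (t-a) + K * h2 (t-a) * Xi (b-t) - K * h1 (t-a) * ph (b-t))"
  have u_eq: "omc p q a b Psi Xi = (\<lambda>t. N0 t / D)"
    unfolding omc_def N0_def K_def D_def ph_def by simp
  have xy: "-(b-t) = t-b" "t-a+(b-t) = b-a" for t by simp_all
  have C: "ph (t-b) * F (t-a) + K * ph (t-a) * ph (b-t) = 0" for t
    using identC[where p=p and q=q and y="b-t" and x="t-a", unfolded xy] unfolding ph_def F_def K_def by simp
  have W: "h1 (t-b) * F (t-a) + K * h1 (t-a) * ph (b-t) = D" for t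
    using identW[where p=p and q=q and y="b-t" and x="t-a", unfolded xy] unfolding ph_def F_def K_def h1_def D_def by simp
  have dN0: "(N0 has_real_derivative N1 t) (at t)" for t
  proof -
    have "(N0 has_real_derivative (- h1 (t-b) * Psi (t-a) - ph (t-b) * F (t-a) + K * h1 (t-a) * Xi (b-t) - K * ph (t-a) * ph (b-t))) (at t)"
      unfolding N0_def F_def ph_def using Tderiv[OF dh0[unfolded ph_def] dPsi dXi, of b a K t] by simp
    moreover have "- h1 (t-b) * Psi (t-a) - ph (t-b) * F (t-a) + K * h1 (t-a) * Xi (b-t) - K * ph (t-a) * ph (b-t) = N1 t"
      using C[of t] unfolding N1_def by (simp add: algebra_simps)
    ultimately show ?thesis by simp
  qed
  have dN1: "(N1 has_real_derivative N2 t) (at t)" for t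
    unfolding N1_def N2_def F_def ph_def using Tderiv[OF dh1 dPsi dXi, of b a K t] by simp
  have d0: "((\<lambda>t. N0 t / D) has_real_derivative N1 t / D) (at t)" for t
    by (rule DERIV_cdivide[OF dN0])
  have d1: "((\<lambda>t. N1 t / D) has_real_derivative N2 t / D) (at t)" for t
    by (rule DERIV_cdivide[OF dN1])
  have comb: "N2 t - (p+q) * N1 t + p*q*N0 t = - D" for t
  proof -
    have "N2 t - (p+q) * N1 t + p*q*N0 t = -(h1 (t-b) * F (t-a) + K * h1 (t-a) * ph (b-t))"
      unfolding N0_def N1_def N2_def Z by (simp add: algebra_simps)
    then show ?thesis using W[of t] by simp
  qed
  have eq: "N2 t / D - (p+q) * (N1 t / D) + p*q*(N0 t / D) = -1" for t
  proof -
    have "N2 t / D - (p+q) * (N1 t / D) + p*q*(N0 t / D) = (N2 t - (p+q) * N1 t + p*q*N0 t) / D"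
      by (simp add: diff_divide_distrib add_divide_distrib)
    then show ?thesis using comb[of t] Dnz D_def by simp
  qed
  show "omc p q a b Psi Xi \<in> Espace [p,q,0]" "\<And>t. Lop [p,q] (omc p q a b Psi Xi) t = -1"
    unfolding u_eq using Esp3[OF d0 d1 eq] by auto
  show "omc p q a b Psi Xi a = 0" "omc p q a b Psi Xi b = 0"
    unfolding u_eq N0_def ph_def using Psi0 Xi0 by simp_all
qed

lemma antider:
  fixes f :: "real \<Rightarrow> real"
  assumes "\<And>x. isCont f x"
  shows "\<exists>G. G 0 = 0 \<and> (\<forall>x. (G has_real_derivative f x) (at x))"
proof -
  obtain F where F: "\<forall>x::real. -\<infinity> < ereal x \<longrightarrow> ereal x < \<infinity> \<longrightarrow> (F has_vector_derivative f x) (at x)"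
    using einterval_antiderivative[of "-\<infinity>" "\<infinity>" f] assms by auto
  then have "(F has_real_derivative f x) (at x)" for x
    by (simp add: has_real_derivative_iff_has_vector_derivative)
  then show ?thesis by (intro exI[of _ "\<lambda>x. F x - F 0"]) (auto intro!: derivative_eq_intros)
qed

lemma hom_zero:
  assumes c: "(p \<le> 0 \<and> 0 \<le> q) \<or> (q \<le> 0 \<and> 0 \<le> p)" and ab: "a < b"
    and d: "\<And>t. d t = \<alpha> * exp (q*t) + \<beta> * phi p q t" and da: "d a = 0" and db: "d b = 0"
  shows "d t = 0"
proof -
  have pb: "phi p q b = exp (q*(b-a)) * phi p q a + exp (p*a) * phi p q (b-a)"
    using phi_add[of p q a "b-a"] by simp
  have pos: "phi p q (b-a) > 0" using phi_mono_pos[OF c] ab by simp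
  have e1: "\<alpha> * exp (q*a) + \<beta> * phi p q a = 0" using d[of a] da by simp
  have e2: "\<alpha> * exp (q*b) + \<beta> * phi p q b = 0" using d[of b] db by simp
  have eq: "exp (q*a) * exp (q*(b-a)) = exp (q*b)" by (simp add: mult_exp_exp algebra_simps)
  have "\<beta> * (exp (q*a) * phi p q b - exp (q*b) * phi p q a)
      = exp (q*a) * (\<alpha> * exp (q*b) + \<beta> * phi p q b) - exp (q*b) * (\<alpha> * exp (q*a) + \<beta> * phi p q a)"
    by (simp add: algebra_simps)
  then have "\<beta> * (exp (q*a) * phi p q b - exp (q*b) * phi p q a) = 0" using e1 e2 by simp
  moreover have "exp (q*a) * phi p q b - exp (q*b) * phi p q a = exp (q*a) * exp (p*a) * phi p q (b-a)"
    unfolding pb eq[symmetric] by (simp add: algebra_simps)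
  moreover have "exp (q*a) * exp (p*a) * phi p q (b-a) > 0" using pos by simp
  ultimately have "\<beta> = 0" using pos by auto
  then have "\<alpha> = 0" using e1 by simp
  then show ?thesis using d[of t] \<open>\<beta> = 0\<close> by simp
qed

lemma antider_le:
  assumes c: "(p \<le> 0 \<and> 0 \<le> q) \<or> (q \<le> 0 \<and> 0 \<le> p)"
    and dG: "\<And>x. (G has_real_derivative phi p q x) (at x)" and G0: "G 0 = 0" and x: "x \<ge> 0"
  shows "G x \<le> x * phi p q x"
proof -
  define h where "h = (\<lambda>y. y * phi p q y - G y)"
  have "h 0 \<le> h x"
  proof (rule DERIV_nonneg_imp_nondecreasing[OF x])
    fix y :: real assume y: "0 \<le> y" "y \<le> x"
    have "(h has_real_derivative (1 * phi p q y + y * (q * phi p q y + exp (p*y)) - phi p q y)) (at y)"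
      unfolding h_def by (auto intro!: derivative_eq_intros phi_deriv dG)
    moreover have "1 * phi p q y + y * (q * phi p q y + exp (p*y)) - phi p q y \<ge> 0"
      using phi1_pos[OF c, of y] y by simp
    ultimately show "\<exists>z. (h has_real_derivative z) (at y) \<and> 0 \<le> z" by blast
  qed
  then show ?thesis unfolding h_def using G0 by simp
qed

lemma Lop2_deriv:
  assumes df: "\<And>t. f differentiable (at t)" and ddf: "\<And>t. deriv f differentiable (at t)"
  shows "Lop [p,q] f t = deriv (deriv f) t - (p+q) * deriv f t + p*q*f t"
proof -
  have Df: "(f has_real_derivative deriv f t) (at t)" for t
    using df DERIV_deriv_iff_real_differentiable by blast
  have Ddf: "(deriv f has_real_derivative deriv (deriv f) t) (at t)" for t
    using ddf DERIV_deriv_iff_real_differentiable by blast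
  show ?thesis by (rule Lop2[OF Df Ddf])
qed

lemma Omega_eq:
  fixes l0 l1 a b :: real and Psi Xi :: "real \<Rightarrow> real"
  assumes c: "l0 \<le> 0" "0 \<le> l1" and ab: "a < b"
    and dPsi: "\<And>x. (Psi has_real_derivative phi (-l0) (-l1) x) (at x)" and Psi0: "Psi 0 = 0"
    and dXi: "\<And>x. (Xi has_real_derivative phi l0 l1 x) (at x)" and Xi0: "Xi 0 = 0"
  shows "Omega l0 l1 a b = omc l0 l1 a b Psi Xi"
proof -
  have c2: "(-l0 \<le> 0 \<and> 0 \<le> -l1) \<or> (-l1 \<le> 0 \<and> 0 \<le> -l0)" using c by simp
  have c1: "(l0 \<le> 0 \<and> 0 \<le> l1) \<or> (l1 \<le> 0 \<and> 0 \<le> l0)" using c by simp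
  have Dnz: "phi (-l0) (-l1) (b-a) \<noteq> 0" using phi_mono_pos[OF c2, of "b-a"] ab by simp
  note W = Omega_cand[OF dPsi Psi0 dXi Xi0 Dnz]
  define w where "w = omc l0 l1 a b Psi Xi"
  have dd: "(\<forall>t. f differentiable (at t)) \<and> (\<forall>t. deriv f differentiable (at t))"
    if "f \<in> Espace [l0,l1,0]" for f
    using that unfolding Espace_def Cn_def by (auto dest: spec[of _ 0] spec[of _ 1])
  show ?thesis unfolding Omega_def
  proof (rule the_equality)
    show "omc l0 l1 a b Psi Xi \<in> Espace [l0, l1, 0] \<and> omc l0 l1 a b Psi Xi a = 0 \<and>
          omc l0 l1 a b Psi Xi b = 0 \<and> (\<forall>t. Lop [l0, l1] (omc l0 l1 a b Psi Xi) t = - 1)"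
      using W by auto
  next
    fix v assume H: "v \<in> Espace [l0, l1, 0] \<and> v a = 0 \<and> v b = 0 \<and> (\<forall>t. Lop [l0, l1] v t = - 1)"
    have wE: "w \<in> Espace [l0,l1,0]" and wL: "\<And>t. Lop [l0,l1] w t = -1" and wa: "w a = 0" and wb: "w b = 0"
      using W unfolding w_def by auto
    have dv: "\<And>t. v differentiable (at t)" and ddv: "\<And>t. deriv v differentiable (at t)"
      using dd[of v] H by auto
    have dw: "\<And>t. w differentiable (at t)" and ddw: "\<And>t. deriv w differentiable (at t)"
      using dd[of w] wE by auto
    define d where "d = (\<lambda>t. v t - w t)"
    have Dv: "(v has_real_derivative deriv v t) (at t)" for t
      using dv DERIV_deriv_iff_real_differentiable by blast
    have Dw: "(w has_real_derivative deriv w t) (at t)" for t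
      using dw DERIV_deriv_iff_real_differentiable by blast
    have Ddv: "(deriv v has_real_derivative deriv (deriv v) t) (at t)" for t
      using ddv DERIV_deriv_iff_real_differentiable by blast
    have Ddw: "(deriv w has_real_derivative deriv (deriv w) t) (at t)" for t
      using ddw DERIV_deriv_iff_real_differentiable by blast
    have Dd: "(d has_real_derivative deriv v t - deriv w t) (at t)" for t
      unfolding d_def by (auto intro!: derivative_eq_intros Dv Dw)
    have dder: "deriv d = (\<lambda>t. deriv v t - deriv w t)" using Dd DERIV_imp_deriv by blast
    have Ddd: "(deriv d has_real_derivative deriv (deriv v) t - deriv (deriv w) t) (at t)" for t
      unfolding dder by (auto intro!: derivative_eq_intros Ddv Ddw)
    have ddf: "d differentiable (at t)" "deriv d differentiable (at t)" for t
      using diffI[OF Dd] diffI[OF Ddd] by auto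
    have dd2: "deriv (\<lambda>t. deriv v t - deriv w t) t = deriv (deriv v) t - deriv (deriv w) t" for t
      using DERIV_imp_deriv[OF Ddd] dder by simp
    have L0: "Lop [l0,l1] d t = 0" for t
    proof -
      have "Lop [l0,l1] d t = Lop [l0,l1] v t - Lop [l0,l1] w t"
        unfolding Lop2_deriv[OF ddf, of l0 l1 t] Lop2_deriv[OF dv ddv, of l0 l1 t] Lop2_deriv[OF dw ddw, of l0 l1 t]
        dd2 dder by (simp add: d_def algebra_simps)
      then show ?thesis using H wL by simp
    qed
    have "d t = 0" for t
      by (rule hom_zero[OF c1 ab, where d=d]) (rule gensol[OF ddf L0], auto simp: d_def H wa wb)
    then show "v = omc l0 l1 a b Psi Xi" unfolding w_def[symmetric] d_def by auto
  qed
qed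

theorem mainTheorem6:
  fixes l0 l1 a b t :: real
  assumes "l0 \<le> 0" and "0 \<le> l1" and "a < b" and "t \<in> {a..b}"
  shows "Omega l0 l1 a b t \<le> (b - a) * \<bar>Gdiag l0 l1 a b t\<bar>"
proof -
  have c1: "(l0 \<le> 0 \<and> 0 \<le> l1) \<or> (l1 \<le> 0 \<and> 0 \<le> l0)" using assms by simp
  have c2: "(-l0 \<le> 0 \<and> 0 \<le> -l1) \<or> (-l1 \<le> 0 \<and> 0 \<le> -l0)" using assms by simp
  obtain Psi where Psi0: "Psi 0 = 0" and dPsi: "\<And>x. (Psi has_real_derivative phi (-l0) (-l1) x) (at x)"
    using antider[of "phi (-l0) (-l1)"] DERIV_isCont[OF phi_deriv] by blast
  obtain Xi where Xi0: "Xi 0 = 0" and dXi: "\<And>x. (Xi has_real_derivative phi l0 l1 x) (at x)"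
    using antider[of "phi l0 l1"] DERIV_isCont[OF phi_deriv] by blast
  have Om: "Omega l0 l1 a b = omc l0 l1 a b Psi Xi"
    by (rule Omega_eq[OF assms(1,2,3) dPsi Psi0 dXi Xi0])
  define x where "x = t - a"
  define y where "y = b - t"
  have x0: "x \<ge> 0" and y0: "y \<ge> 0" using assms(4) by (auto simp: x_def y_def)
  have xy: "x + y = b - a" "-y = t - b" by (auto simp: x_def y_def)
  define F where "F = phi (-l0) (-l1)"
  define ph where "ph = phi l0 l1"
  define K where "K = exp (-(l0+l1)*(b-a))"
  define D where "D = F (b-a)"
  have Dpos: "D > 0" unfolding D_def F_def using phi_mono_pos[OF c2, of "b-a"] assms(3) by simp
  have Fx: "F x \<ge> 0" and Fy: "F y \<ge> 0" unfolding F_def using phi_nonneg[OF c2] x0 y0 by auto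
  have phx: "ph x \<ge> 0" and phy: "ph y \<ge> 0" unfolding ph_def using phi_nonneg[OF c1] x0 y0 by auto
  have Kpos: "K > 0" unfolding K_def by simp
  have negy: "ph (t-b) = - F y" unfolding ph_def F_def xy(2)[symmetric] by (rule phi_neg)
  have Ci: "K * ph x * ph y = F y * F x"
    using identC[where p=l0 and q=l1 and x=x and y=y] unfolding xy(1) phi_neg
    unfolding ph_def F_def K_def by simp
  have b1: "Psi x \<le> x * F x" unfolding F_def by (rule antider_le[OF c2 dPsi Psi0 x0])
  have b2: "Xi y \<le> y * ph y" unfolding ph_def by (rule antider_le[OF c1 dXi Xi0 y0])
  have om: "Omega l0 l1 a b t = (F y * Psi x + K * ph x * Xi y) / D"
    unfolding Om omc_def D_def F_def K_def ph_def x_def y_def using negy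
    by (simp add: ph_def F_def y_def)
  have G: "Gdiag l0 l1 a b t = - F y * F x / D"
    unfolding Gdiag_def Phi_eq D_def using negy by (simp add: ph_def F_def x_def)
  have "F y * Psi x + K * ph x * Xi y \<le> F y * (x * F x) + K * ph x * (y * ph y)"
    using b1 b2 Fy Kpos phx by (intro add_mono mult_left_mono) auto
  also have "\<dots> = (b - a) * (F x * F y)" using Ci xy(1)[symmetric]
    by (simp add: algebra_simps)
  finally have num: "F y * Psi x + K * ph x * Xi y \<le> (b - a) * (F x * F y)" .
  have "\<bar>Gdiag l0 l1 a b t\<bar> = F x * F y / D" unfolding G using Fx Fy Dpos by (simp add: abs_mult)
  then show ?thesis unfolding om using num Dpos by (simp add: divide_right_mono)
qed

end
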